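(* Let $f\in\mathbb C[U_1,\ldots,U_n]$ have nonzero constant term. Then there exists $m\ge1$ with $\mathcal L(f^m)\ne0$.
   Context: $\mathcal L:\mathbb C[U_1,\ldots,U_n]\to\mathbb C$ is the $\mathbb C$-linear map defined on monomials by $\mathcal L(U_1^{\ell_1}\cdots U_n^{\ell_n})=\ell_1!\cdots\ell_n!$. *)

theory Defs
  imports Complex_Main "HOL-Library.Poly_Mapping"
begin

text \<open>The variable U_(i+1) corresponds to index i.\<close>

type_synonym cpoly = "(nat \<Rightarrow>\<^sub>0 nat) \<Rightarrow>\<^sub>0 complex"

definition in_vars :: "nat \<Rightarrow> cpoly \<Rightarrow> bool" where
  "in_vars n p \<longleftrightarrow> (\<forall>m \<in> Poly_Mapping.keys p. Poly_Mapping.keys m \<subseteq> {..<n})"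

definition Lfun :: "cpoly \<Rightarrow> complex" where
  "Lfun p = (\<Sum>(m::nat \<Rightarrow>\<^sub>0 nat) \<in> Poly_Mapping.keys p. Poly_Mapping.lookup p m * (\<Prod>(i::nat) \<in> Poly_Mapping.keys m. fact (Poly_Mapping.lookup m i) :: complex))"

definition const_term :: "cpoly \<Rightarrow> complex" where
  "const_term p = Poly_Mapping.lookup p 0"

end

theory Submission
  imports Defs "HOL-Computational_Algebra.Polynomial" "HOL-Computational_Algebra.Primes"
begin

definition subr :: "complex set \<Rightarrow> bool" where
  "subr S \<longleftrightarrow> (\<forall>x\<in>S. \<forall>y\<in>S. x + y \<in> S \<and> x * y \<in> S) \<and> (\<forall>x\<in>S. - x \<in> S) \<and> 1 \<in> S"

lemma subr_add: "subr S \<Longrightarrow> x \<in> S \<Longrightarrow> y \<in> S \<Longrightarrow> x + y \<in> S"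
  by (simp add: subr_def)
lemma subr_mult: "subr S \<Longrightarrow> x \<in> S \<Longrightarrow> y \<in> S \<Longrightarrow> x * y \<in> S"
  by (simp add: subr_def)
lemma subr_uminus: "subr S \<Longrightarrow> x \<in> S \<Longrightarrow> - x \<in> S"
  by (simp add: subr_def)
lemma subr_one: "subr S \<Longrightarrow> 1 \<in> S"
  by (simp add: subr_def)
lemma subr_zero: "subr S \<Longrightarrow> 0 \<in> S"
  by (metis add.right_inverse subr_add subr_one subr_uminus)
lemma subr_diff: "subr S \<Longrightarrow> x \<in> S \<Longrightarrow> y \<in> S \<Longrightarrow> x - y \<in> S"
  by (metis diff_conv_add_uminus subr_add subr_uminus)
lemma subr_of_nat: "subr S \<Longrightarrow> of_nat n \<in> S"
  by (induction n) (auto simp: subr_zero subr_one subr_add)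
lemma subr_of_int: "subr S \<Longrightarrow> of_int z \<in> S"
  by (cases z rule: int_cases) (auto simp: subr_of_nat subr_uminus simp del: of_nat_Suc)
lemma subr_power: "subr S \<Longrightarrow> x \<in> S \<Longrightarrow> x ^ n \<in> S"
  by (induction n) (auto simp: subr_one subr_mult)
lemma subr_sum: "subr S \<Longrightarrow> (\<And>i. i \<in> A \<Longrightarrow> f i \<in> S) \<Longrightarrow> sum f A \<in> S"
  by (induction A rule: infinite_finite_induct) (auto simp: subr_zero subr_add)
lemma subr_prod: "subr S \<Longrightarrow> (\<And>i. i \<in> A \<Longrightarrow> f i \<in> S) \<Longrightarrow> prod f A \<in> S"
  by (induction A rule: infinite_finite_induct) (auto simp: subr_one subr_mult)

definition pover :: "complex set \<Rightarrow> complex poly \<Rightarrow> bool" where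
  "pover S P \<longleftrightarrow> (\<forall>i. coeff P i \<in> S)"

lemma pover_0: "subr S \<Longrightarrow> pover S 0"
  by (simp add: pover_def subr_zero)
lemma pover_const: "subr S \<Longrightarrow> x \<in> S \<Longrightarrow> pover S [:x:]"
  by (simp add: pover_def coeff_pCons subr_zero split: nat.split)
lemma pover_pCons: "subr S \<Longrightarrow> x \<in> S \<Longrightarrow> pover S P \<Longrightarrow> pover S (pCons x P)"
  by (simp add: pover_def coeff_pCons split: nat.split)
lemma pover_1: "subr S \<Longrightarrow> pover S 1"
  by (simp add: pover_def coeff_1 subr_one subr_zero)
lemma pover_X: "subr S \<Longrightarrow> pover S [:0,1:]"
  by (simp add: pover_pCons pover_const subr_zero subr_one)
lemma pover_add: "subr S \<Longrightarrow> pover S P \<Longrightarrow> pover S Q \<Longrightarrow> pover S (P + Q)"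
  by (simp add: pover_def subr_add)
lemma pover_diff: "subr S \<Longrightarrow> pover S P \<Longrightarrow> pover S Q \<Longrightarrow> pover S (P - Q)"
  by (simp add: pover_def subr_diff)
lemma pover_uminus: "subr S \<Longrightarrow> pover S P \<Longrightarrow> pover S (- P)"
  by (simp add: pover_def subr_uminus)
lemma pover_mult: "subr S \<Longrightarrow> pover S P \<Longrightarrow> pover S Q \<Longrightarrow> pover S (P * Q)"
  unfolding pover_def coeff_mult by (auto intro!: subr_sum subr_mult)
lemma pover_smult: "subr S \<Longrightarrow> x \<in> S \<Longrightarrow> pover S P \<Longrightarrow> pover S (smult x P)"
  by (simp add: pover_def subr_mult)
lemma pover_power: "subr S \<Longrightarrow> pover S P \<Longrightarrow> pover S (P ^ n)"
  by (induction n) (auto simp: pover_1 pover_mult)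
lemma pover_monom: "subr S \<Longrightarrow> x \<in> S \<Longrightarrow> pover S (monom x n)"
  by (simp add: pover_def coeff_monom subr_zero)
lemma pover_coeff: "pover S P \<Longrightarrow> coeff P i \<in> S"
  by (simp add: pover_def)
lemma pover_lc: "pover S P \<Longrightarrow> lead_coeff P \<in> S"
  by (simp add: pover_def)
lemma pover_poly: "subr S \<Longrightarrow> pover S P \<Longrightarrow> x \<in> S \<Longrightarrow> poly P x \<in> S"
  unfolding poly_altdef pover_def by (auto intro!: subr_sum subr_mult subr_power)

fun rgen :: "complex list \<Rightarrow> complex set" where
  "rgen [] = range of_int"
| "rgen (b # bs) = {poly P b | P. pover (rgen bs) P}"

lemma subr_ints: "subr (range of_int)"
  unfolding subr_def by (auto; metis of_int_add of_int_mult of_int_minus of_int_1 rangeI)+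

lemma subr_rgen: "subr (rgen l)"
proof (induction l)
  case Nil then show ?case by (simp add: subr_ints)
next
  case (Cons b l)
  show ?case unfolding subr_def rgen.simps
  proof (intro conjI ballI)
    fix x y assume "x \<in> {poly P b |P. pover (rgen l) P}" "y \<in> {poly P b |P. pover (rgen l) P}"
    then obtain P Q where "x = poly P b" "y = poly Q b" "pover (rgen l) P" "pover (rgen l) Q" by auto
    have "poly (P + Q) b = x + y" "poly (P * Q) b = x * y" "pover (rgen l) (P + Q)" "pover (rgen l) (P * Q)"
      using Cons \<open>x = _\<close> \<open>y = _\<close> \<open>pover (rgen l) P\<close> \<open>pover (rgen l) Q\<close>
      by (auto intro: pover_add pover_mult)
    then show "x + y \<in> {poly P b |P. pover (rgen l) P}" "x * y \<in> {poly P b |P. pover (rgen l) P}"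
      by (metis (mono_tags, lifting) mem_Collect_eq)+
  next
    fix x assume "x \<in> {poly P b |P. pover (rgen l) P}"
    then obtain P where "x = poly P b" "pover (rgen l) P" by auto
    then show "- x \<in> {poly P b |P. pover (rgen l) P}"
      using Cons by (auto intro!: exI[of _ "- P"] pover_uminus)
  next
    show "1 \<in> {poly P b |P. pover (rgen l) P}"
      using Cons by (auto intro!: exI[of _ 1] pover_1)
  qed
qed

lemma rgen_sub: "rgen l \<subseteq> rgen (b # l)"
proof
  fix x assume "x \<in> rgen l"
  then show "x \<in> rgen (b # l)" using subr_rgen[of l]
    by (auto intro!: exI[of _ "[:x:]"] pover_const)
qed

lemma rgen_gen: "b \<in> rgen (b # l)"
  using subr_rgen[of l] by (auto intro!: exI[of _ "[:0,1:]"] pover_X)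

lemma rgen_set: "set l \<subseteq> rgen l"
proof (induction l)
  case (Cons b l) then show ?case using rgen_gen[of b l] rgen_sub[of l b] by auto
qed simp

lemma pseudo_div_ex:
  assumes S: "subr S" and G: "pover S G" "G \<noteq> 0"
  shows "pover S F \<Longrightarrow> \<exists>K M R. pover S M \<and> pover S R \<and>
           smult (lead_coeff G ^ K) F = M * G + R \<and> (R = 0 \<or> degree R < degree G)"
proof (induction "degree F" arbitrary: F rule: less_induct)
  case less
  show ?case
  proof (cases "F = 0 \<or> degree F < degree G")
    case True
    then show ?thesis using less.prems S by (intro exI[of _ 0] exI[of _ 0] exI[of _ F]) (auto simp: pover_0)
  next
    case False
    then have F0: "F \<noteq> 0" and dg: "degree G \<le> degree F" by auto
    define m where "m = monom (lead_coeff F) (degree F - degree G)"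
    define F' where "F' = smult (lead_coeff G) F - m * G"
    have pm: "pover S m" unfolding m_def using S less.prems by (simp add: pover_monom pover_lc)
    have pF': "pover S F'" unfolding F'_def using S less.prems G pm
      by (intro pover_diff pover_mult pover_smult pover_lc) auto
    have d1: "degree (m * G) \<le> degree F"
      unfolding m_def using dg
      by (metis (no_types, lifting) add.commute degree_monom_le degree_mult_le le_add_diff_inverse le_trans nat_add_left_cancel_le)
    have d2: "degree F' \<le> degree F" unfolding F'_def
      using d1 degree_diff_le degree_smult_le by blast
    have c: "coeff F' (degree F) = 0"
      unfolding F'_def m_def using dg
      by (simp add: coeff_monom_mult)
    have "F' = 0 \<or> degree F' < degree F"
    proof (cases "F' = 0")
      case False
      then have "degree F' \<noteq> degree F" using c by (metis leading_coeff_0_iff)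
      then show ?thesis using d2 by auto
    qed simp
    then obtain K M R where KMR: "pover S M" "pover S R"
        "smult (lead_coeff G ^ K) F' = M * G + R" "R = 0 \<or> degree R < degree G"
    proof
      assume "F' = 0"
      then show ?thesis using that[of 0 0 0] S by (auto simp: pover_0)
    next
      assume "degree F' < degree F"
      from less.hyps[OF this pF'] show ?thesis using that by blast
    qed
    have "smult (lead_coeff G ^ Suc K) F = smult (lead_coeff G ^ K) F' + smult (lead_coeff G ^ K) (m * G)"
      unfolding F'_def by (simp add: algebra_simps smult_diff_right)
    also have "\<dots> = (M + smult (lead_coeff G ^ K) m) * G + R"
      using KMR(3) by (simp add: algebra_simps)
    finally show ?thesis using KMR S pm G
      by (intro exI[of _ "Suc K"] exI[of _ "M + smult (lead_coeff G ^ K) m"] exI[of _ R])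
         (auto intro!: pover_add pover_smult subr_power pover_lc)
  qed
qed

lemma star_nil:
  assumes "d \<in> rgen []" "d \<noteq> 0"
  shows "\<exists>p. prime p \<and> (\<forall>r\<in>rgen []. \<forall>k. of_nat p * r \<noteq> d ^ k)"
proof -
  obtain z where z: "d = of_int z" using assms by auto
  with assms have z0: "z \<noteq> 0" by auto
  obtain p where p: "prime p" "nat \<bar>z\<bar> < p" using bigger_prime by blast
  have "of_nat p * r \<noteq> d ^ k" if rr: "r \<in> rgen []" for r k
  proof
    assume eq: "of_nat p * r = d ^ k"
    obtain w where w: "r = of_int w" using rr by auto
    have "of_int (int p * w) = (of_int (z ^ k) :: complex)" using eq w z by simp
    then have e: "int p * w = z ^ k" using of_int_eq_iff by blast
    have pi: "prime (int p)" using p by simp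
    show False
    proof (cases k)
      case 0
      then have "int p dvd 1" using e by (metis dvd_triv_left power_0)
      then show False using pi by (simp add: prime_int_iff)
    next
      case (Suc k')
      then have "int p dvd z ^ k" using e by (metis dvd_triv_left)
      then have "int p dvd z" using pi prime_dvd_power by blast
      then have "int p \<le> \<bar>z\<bar>" using dvd_imp_le_int[OF z0] by fastforce
      then show False using p by linarith
    qed
  qed
  then show ?thesis using p by blast
qed

lemma star: "d \<in> rgen l \<Longrightarrow> d \<noteq> 0 \<Longrightarrow> \<exists>p. prime p \<and> (\<forall>r\<in>rgen l. \<forall>k. of_nat p * r \<noteq> d ^ k)"
proof (induction l arbitrary: d)
  case Nil then show ?case using star_nil by blast
next
  case (Cons b l)
  define R' where "R' = rgen l"
  have S: "subr R'" unfolding R'_def by (rule subr_rgen)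
  obtain D where D: "pover R' D" "d = poly D b" using Cons.prems unfolding R'_def by auto
  have D0: "D \<noteq> 0" using D Cons.prems by auto
  show ?case
  proof (cases "\<exists>Q. pover R' Q \<and> Q \<noteq> 0 \<and> poly Q b = 0")
    case False
    define d' where "d' = lead_coeff D"
    have d': "d' \<in> R'" "d' \<noteq> 0" unfolding d'_def using D D0 by (auto simp: pover_lc)
    obtain p where p: "prime p" "\<forall>r\<in>R'. \<forall>k. of_nat p * r \<noteq> d' ^ k"
      using Cons.IH d' unfolding R'_def by blast
    have "of_nat p * r \<noteq> d ^ k" if rr: "r \<in> rgen (b # l)" for r k
    proof
      assume eq: "of_nat p * r = d ^ k"
      obtain Y where Y: "pover R' Y" "r = poly Y b" using rr unfolding R'_def by auto
      define Z where "Z = smult (of_nat p) Y - D ^ k"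
      have "pover R' Z" unfolding Z_def using S Y D
        by (intro pover_diff pover_smult pover_power subr_of_nat) auto
      moreover have "poly Z b = 0" unfolding Z_def using eq Y D by simp
      ultimately have "Z = 0" using False by blast
      then have "D ^ k = smult (of_nat p) Y" unfolding Z_def by simp
      then have "lead_coeff (D ^ k) = of_nat p * coeff Y (degree (D ^ k))" by simp
      then have "of_nat p * coeff Y (degree (D ^ k)) = d' ^ k" unfolding d'_def lead_coeff_power by simp
      moreover have "coeff Y (degree (D ^ k)) \<in> R'" using Y pover_coeff by blast
      ultimately show False using p by blast
    qed
    then show ?thesis using p by blast
  next
    case True
    then obtain n where "\<exists>Q. pover R' Q \<and> Q \<noteq> 0 \<and> poly Q b = 0 \<and> degree Q = n"
      by blast
    then obtain n where hn: "\<exists>Q. pover R' Q \<and> Q \<noteq> 0 \<and> poly Q b = 0 \<and> degree Q = n"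
      and nmin: "\<And>m. m < n \<Longrightarrow> \<not> (\<exists>Q. pover R' Q \<and> Q \<noteq> 0 \<and> poly Q b = 0 \<and> degree Q = m)"
      using exists_least_iff[of "\<lambda>n. \<exists>Q. pover R' Q \<and> Q \<noteq> 0 \<and> poly Q b = 0 \<and> degree Q = n"] by blast
    then obtain Q where Q: "pover R' Q" "Q \<noteq> 0" "poly Q b = 0" "degree Q = n" by blast
    have Qmin: "Z = 0" if zz: "pover R' Z" "poly Z b = 0" "degree Z < degree Q" for Z
    proof (rule ccontr)
      assume "Z \<noteq> 0"
      then show False using nmin[of "degree Z"] zz Q(4) by auto
    qed
    have Qpos: "degree Q > 0"
    proof (rule ccontr)
      assume "\<not> degree Q > 0"
      then have d0: "degree Q = 0" by simp
      have QQ: "Q = [:coeff Q 0:]" using degree_0_id[OF d0] by (rule sym)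
      have "poly Q b = coeff Q 0" by (subst QQ) simp
      moreover have "coeff Q 0 \<noteq> 0" using Q(2) d0 leading_coeff_0_iff[of Q] by simp
      ultimately show False using Q(3) by simp
    qed
    define q where "q = lead_coeff Q"
    have q: "q \<in> R'" "q \<noteq> 0" unfolding q_def using Q(1,2) by (auto simp: pover_lc)
    define inJ where "inJ G \<longleftrightarrow> (\<exists>A B. pover R' A \<and> pover R' B \<and> G = A * D + B * Q)" for G
    have JD: "inJ D" unfolding inJ_def using S by (intro exI[of _ 1] exI[of _ 0]) (auto simp: pover_1 pover_0)
    have "\<exists>G. inJ G \<and> poly G b \<noteq> 0" using JD D Cons.prems by blast
    then obtain m where "\<exists>G. inJ G \<and> poly G b \<noteq> 0 \<and> degree G = m" by blast
    then obtain m where hm: "\<exists>G. inJ G \<and> poly G b \<noteq> 0 \<and> degree G = m"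
      and mmin: "\<And>m'. m' < m \<Longrightarrow> \<not> (\<exists>G. inJ G \<and> poly G b \<noteq> 0 \<and> degree G = m')"
      using exists_least_iff[of "\<lambda>m. \<exists>G. inJ G \<and> poly G b \<noteq> 0 \<and> degree G = m"] by blast
    then obtain G where G: "inJ G" "poly G b \<noteq> 0" "degree G = m" by blast
    obtain A B where AB: "pover R' A" "pover R' B" "G = A * D + B * Q" using G unfolding inJ_def by blast
    have pG: "pover R' G" using AB S D Q by (auto intro!: pover_add pover_mult)
    have G0: "G \<noteq> 0" using G by auto
    have deg0: "degree G = 0"
    proof (rule ccontr)
      assume dG: "degree G \<noteq> 0"
      have le: "degree G \<le> degree Q"
      proof (rule ccontr)
        assume lt: "\<not> degree G \<le> degree Q"
        obtain K M Rm where KM: "pover R' M" "pover R' Rm" "smult (q ^ K) G = M * Q + Rm"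
          "Rm = 0 \<or> degree Rm < degree Q"
          using pseudo_div_ex[OF S Q(1) Q(2) pG] unfolding q_def by blast
        have "poly Rm b = q ^ K * poly G b"
          using KM(3) Q(3) by (metis add_0 mult_zero_right poly_add poly_mult poly_smult)
        then have Rb: "poly Rm b \<noteq> 0" using q G by simp
        then have "Rm \<noteq> 0" by auto
        then have "degree Rm < m" using KM(4) lt G by auto
        moreover have "inJ Rm" unfolding inJ_def
        proof (intro exI conjI)
          show "Rm = smult (q ^ K) A * D + (smult (q ^ K) B - M) * Q"
            using KM(3) AB(3) by (simp add: algebra_simps smult_add_right)
          show "pover R' (smult (q ^ K) A)" using S AB q by (simp add: pover_smult subr_power)
          show "pover R' (smult (q ^ K) B - M)" using S AB q KM by (simp add: pover_diff pover_smult subr_power)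
        qed
        ultimately show False using mmin Rb by blast
      qed
      define c where "c = lead_coeff G"
      have c: "c \<in> R'" "c \<noteq> 0" unfolding c_def using pG G0 by (auto simp: pover_lc)
      obtain K M Rm where KM: "pover R' M" "pover R' Rm" "smult (c ^ K) Q = M * G + Rm"
          "Rm = 0 \<or> degree Rm < degree G"
        using pseudo_div_ex[OF S pG G0 Q(1)] unfolding c_def by blast
      have JR: "inJ Rm" unfolding inJ_def
      proof (intro exI conjI)
        show "Rm = (- M * A) * D + ([:c ^ K:] - M * B) * Q"
          using KM(3) AB(3) by (simp add: algebra_simps)
        show "pover R' (- M * A)" using S AB KM by (simp add: pover_uminus pover_mult)
        show "pover R' ([:c ^ K:] - M * B)" using S AB c KM by (simp add: pover_diff pover_mult pover_const subr_power)
      qed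
      have Rb: "poly Rm b = 0"
      proof (rule ccontr)
        assume "poly Rm b \<noteq> 0"
        then have "Rm \<noteq> 0" by auto
        then have "degree Rm < m" using KM(4) G by auto
        then show False using mmin JR \<open>poly Rm b \<noteq> 0\<close> by blast
      qed
      have "poly M b * poly G b = 0"
        using KM(3) Q(3) Rb by (metis add.right_neutral mult_zero_right poly_add poly_mult poly_smult)
      then have Mb: "poly M b = 0" using G by simp
      show False
      proof (cases "M = 0")
        case True
        then have "smult (c ^ K) Q = Rm" using KM(3) by simp
        moreover have "degree (smult (c ^ K) Q) = degree Q" using c(2) by simp
        ultimately have "degree Rm = degree Q" by simp
        then show False using KM(4) le Q(2) \<open>smult (c ^ K) Q = Rm\<close> c by auto
      next
        case False
        have "degree (M * G) = degree M + degree G" using False G0 by (rule degree_mult_eq)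
        moreover have "M * G = smult (c ^ K) Q - Rm" using KM(3) by simp
        moreover have "degree (smult (c ^ K) Q - Rm) \<le> degree Q"
          using KM(4) le by (metis degree_diff_le degree_smult_le less_imp_le_nat order_trans degree_0 zero_le)
        ultimately have "degree M + degree G \<le> degree Q" by metis
        then have "degree M < degree Q" using dG by linarith
        then have "M = 0" using Qmin KM(1) Mb by blast
        then show False using False by simp
      qed
    qed
    define g where "g = coeff G 0"
    have Gc: "G = [:g:]" unfolding g_def using degree_0_id[OF deg0] by (rule sym)
    have Gb: "poly G b = g" by (subst Gc) simp
    have g1: "g \<in> R'" unfolding g_def by (rule pover_coeff[OF pG])
    have g2: "g \<noteq> 0" using Gb G(2) by simp
    have "poly G b = poly A b * d" using AB(3) D(2) Q(3) by simp
    then have g3: "g = poly A b * d" using Gb by simp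
    note g = g1 g2 g3
    have qg: "q * g \<in> R'" "q * g \<noteq> 0" using q g1 g2 S by (auto simp: subr_mult)
    obtain p where p: "prime p" "\<forall>r\<in>R'. \<forall>k. of_nat p * r \<noteq> (q * g) ^ k"
      using Cons.IH qg unfolding R'_def by blast
    have "of_nat p * r \<noteq> d ^ k" if rr: "r \<in> rgen (b # l)" for r k
    proof
      assume eq: "of_nat p * r = d ^ k"
      obtain Y where Y: "pover R' Y" "r = poly Y b" using rr unfolding R'_def by auto
      define Y' where "Y' = Y * A ^ k"
      have pY': "pover R' Y'" unfolding Y'_def using S Y AB by (auto intro!: pover_mult pover_power)
      have "poly Y' b = r * poly A b ^ k" unfolding Y'_def using Y(2) by simp
      then have "of_nat p * poly Y' b = (of_nat p * r) * poly A b ^ k" by (simp add: mult.assoc)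
      also have "\<dots> = (poly A b * d) ^ k" using eq by (simp add: power_mult_distrib mult.commute)
      finally have Y'b: "of_nat p * poly Y' b = g ^ k" using g3 by simp
      obtain K M Rm where KM: "pover R' M" "pover R' Rm" "smult (q ^ K) Y' = M * Q + Rm"
          "Rm = 0 \<or> degree Rm < degree Q"
        using pseudo_div_ex[OF S Q(1) Q(2) pY'] unfolding q_def by blast
      have Rb: "poly Rm b = q ^ K * poly Y' b"
        using KM(3) Q(3) by (metis add_0 mult_zero_right poly_add poly_mult poly_smult)
      define Z where "Z = smult (of_nat p) Rm - [:q ^ K * g ^ k:]"
      have "q ^ K * g ^ k \<in> R'" using S q(1) g1 by (simp add: subr_mult subr_power)
      then have pZ: "pover R' Z" unfolding Z_def using S KM(2)
        by (simp add: pover_diff pover_smult pover_const subr_of_nat)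
      have "poly Z b = q ^ K * (of_nat p * poly Y' b) - q ^ K * g ^ k"
        unfolding Z_def by (simp add: Rb mult.left_commute)
      then have Zb: "poly Z b = 0" using Y'b by simp
      have "degree Rm \<le> degree Q - 1" using KM(4) Qpos by auto
      then have "degree (smult (of_nat p) Rm) \<le> degree Q - 1" using degree_smult_le order.trans by blast
      moreover have "degree [:q ^ K * g ^ k:] \<le> degree Q - 1" by simp
      ultimately have "degree Z \<le> degree Q - 1" unfolding Z_def by (rule degree_diff_le)
      then have "degree Z < degree Q" using Qpos by linarith
      then have "Z = 0" using Qmin pZ Zb by blast
      then have "coeff Z 0 = 0" by simp
      then have e: "of_nat p * coeff Rm 0 = q ^ K * g ^ k" unfolding Z_def by simp
      have "of_nat p * (coeff Rm 0 * q ^ k * g ^ K) = (q * g) ^ (K + k)"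
        using e by (simp add: power_mult_distrib power_add algebra_simps)
      moreover have "coeff Rm 0 * q ^ k * g ^ K \<in> R'"
        using S KM q g1 by (auto intro!: subr_mult subr_power pover_coeff)
      ultimately show False using p by blast
    qed
    then show ?thesis using p by blast
  qed
qed


definition wt :: "(nat \<Rightarrow>\<^sub>0 nat) \<Rightarrow> complex" where
  "wt m = (\<Prod>i \<in> Poly_Mapping.keys m. fact (Poly_Mapping.lookup m i))"

lemma Lfun_wt: "Lfun p = (\<Sum>m \<in> Poly_Mapping.keys p. Poly_Mapping.lookup p m * wt m)"
  unfolding Lfun_def wt_def by simp

lemma Lfun_super: "finite A \<Longrightarrow> Poly_Mapping.keys p \<subseteq> A \<Longrightarrow>
    Lfun p = (\<Sum>m \<in> A. Poly_Mapping.lookup p m * wt m)"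
  unfolding Lfun_wt by (rule sum.mono_neutral_left) (auto simp: in_keys_iff)

lemma Lfun_zero: "Lfun 0 = 0"
  unfolding Lfun_wt by simp

lemma Lfun_add: "Lfun (p + q) = Lfun p + Lfun q"
proof -
  let ?A = "Poly_Mapping.keys p \<union> Poly_Mapping.keys q"
  have "Lfun (p + q) = (\<Sum>m \<in> ?A. Poly_Mapping.lookup (p + q) m * wt m)"
    by (rule Lfun_super) (auto simp: keys_add)
  also have "\<dots> = (\<Sum>m \<in> ?A. Poly_Mapping.lookup p m * wt m) + (\<Sum>m \<in> ?A. Poly_Mapping.lookup q m * wt m)"
    by (simp add: lookup_add distrib_right sum.distrib)
  also have "\<dots> = Lfun p + Lfun q"
    by (subst (1 2) Lfun_super[of ?A]) auto
  finally show ?thesis .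
qed

lemma Lfun_sum: "Lfun (sum f I) = (\<Sum>i\<in>I. Lfun (f i))"
  by (induction I rule: infinite_finite_induct) (auto simp: Lfun_zero Lfun_add)

lemma Lfun_of_nat_mult: "Lfun (of_nat n * X) = of_nat n * Lfun X"
  by (induction n) (auto simp: Lfun_zero Lfun_add distrib_right)

lemma Lfun_single: "Lfun (Poly_Mapping.single m a) = a * wt m"
  unfolding Lfun_wt by auto

definition cin :: "complex set \<Rightarrow> cpoly \<Rightarrow> bool" where
  "cin S X \<longleftrightarrow> (\<forall>m. Poly_Mapping.lookup X m \<in> S)"

lemma cin_single: "subr S \<Longrightarrow> a \<in> S \<Longrightarrow> cin S (Poly_Mapping.single m a)"
  unfolding cin_def by (auto simp: lookup_single when_def subr_zero)

lemma cin_add: "subr S \<Longrightarrow> cin S X \<Longrightarrow> cin S Y \<Longrightarrow> cin S (X + Y)"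
  unfolding cin_def by (auto simp: lookup_add subr_add)

lemma cin_sum: "subr S \<Longrightarrow> (\<And>i. i \<in> I \<Longrightarrow> cin S (f i)) \<Longrightarrow> cin S (sum f I)"
  unfolding cin_def by (auto simp: lookup_sum intro!: subr_sum)

lemma pm_expand: "X = (\<Sum>a \<in> Poly_Mapping.keys X. Poly_Mapping.single a (Poly_Mapping.lookup X a))"
proof (rule poly_mapping_eqI)
  fix k
  show "Poly_Mapping.lookup X k = Poly_Mapping.lookup (\<Sum>a \<in> Poly_Mapping.keys X. Poly_Mapping.single a (Poly_Mapping.lookup X a)) k"
    by (simp add: lookup_sum lookup_single when_def in_keys_iff)
qed

lemma cin_mult: assumes S: "subr S" and X: "cin S X" and Y: "cin S Y" shows "cin S (X * Y)"
proof -
  have "X * Y = (\<Sum>a \<in> Poly_Mapping.keys X. Poly_Mapping.single a (Poly_Mapping.lookup X a)) *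
                (\<Sum>b \<in> Poly_Mapping.keys Y. Poly_Mapping.single b (Poly_Mapping.lookup Y b))"
    by (subst (1) pm_expand[of X], subst (1) pm_expand[of Y]) (rule refl)
  also have "\<dots> = (\<Sum>a \<in> Poly_Mapping.keys X. \<Sum>b \<in> Poly_Mapping.keys Y.
       Poly_Mapping.single (a + b) (Poly_Mapping.lookup X a * Poly_Mapping.lookup Y b))"
    by (simp add: sum_product mult_single)
  finally show ?thesis using S X Y unfolding cin_def[of S X] cin_def[of S Y]
    by (auto intro!: cin_sum cin_single subr_mult)
qed

lemma cin_one: "subr S \<Longrightarrow> cin S 1"
  using cin_single[of S 1 0] by (simp add: subr_one)

lemma cin_power: "subr S \<Longrightarrow> cin S X \<Longrightarrow> cin S (X ^ n)"
  by (induction n) (auto simp: cin_one cin_mult)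

lemma fact_in: "subr S \<Longrightarrow> (fact n :: complex) \<in> S"
proof -
  assume "subr S"
  then have "(of_nat (fact n :: nat) :: complex) \<in> S" by (rule subr_of_nat)
  then show ?thesis by simp
qed

lemma wt_in: "subr S \<Longrightarrow> wt m \<in> S"
  unfolding wt_def by (rule subr_prod) (auto intro: fact_in)

lemma Lfun_in: "subr S \<Longrightarrow> cin S X \<Longrightarrow> Lfun X \<in> S"
  unfolding Lfun_wt cin_def by (auto intro!: subr_sum subr_mult wt_in)

definition pm :: "complex set \<Rightarrow> nat \<Rightarrow> complex \<Rightarrow> bool" where
  "pm S p x \<longleftrightarrow> (\<exists>s\<in>S. x = of_nat p * s)"

lemma pm_add: "subr S \<Longrightarrow> pm S p x \<Longrightarrow> pm S p y \<Longrightarrow> pm S p (x + y)"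
  unfolding pm_def by (auto intro!: bexI[of _ "_ + _"] subr_add simp: distrib_left)

lemma pm_zero: "subr S \<Longrightarrow> pm S p 0"
  unfolding pm_def using subr_zero by force

lemma pm_sum: "subr S \<Longrightarrow> (\<And>i. i \<in> I \<Longrightarrow> pm S p (f i)) \<Longrightarrow> pm S p (sum f I)"
  by (induction I rule: infinite_finite_induct) (auto simp: pm_zero pm_add)

definition nsm :: "nat \<Rightarrow> (nat \<Rightarrow>\<^sub>0 nat) \<Rightarrow> (nat \<Rightarrow>\<^sub>0 nat)" where
  "nsm n \<alpha> = (\<Sum>i<n. \<alpha>)"

lemma nsm_0: "nsm 0 \<alpha> = 0" by (simp add: nsm_def)
lemma nsm_Suc: "nsm (Suc n) \<alpha> = \<alpha> + nsm n \<alpha>" unfolding nsm_def sum.lessThan_Suc by (rule add.commute)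
lemma nsm_zero: "nsm n 0 = 0" by (simp add: nsm_def)

lemma single_power: "(Poly_Mapping.single \<alpha> a) ^ n = Poly_Mapping.single (nsm n \<alpha>) (a ^ n)"
  by (induction n) (simp_all add: nsm_0 nsm_Suc mult_single)

lemma lookup_nsm: "Poly_Mapping.lookup (nsm n \<alpha>) j = n * Poly_Mapping.lookup \<alpha> j"
  unfolding nsm_def lookup_sum by simp

lemma keys_nsm: "n > 0 \<Longrightarrow> Poly_Mapping.keys (nsm n \<alpha>) = Poly_Mapping.keys \<alpha>"
  by (auto simp: in_keys_iff lookup_nsm)

lemma Lfun_zero_power: "Lfun ((Poly_Mapping.single 0 a) ^ p) = a ^ p"
  by (simp add: single_power Lfun_single wt_def nsm_zero)

lemma Lfun_mono_power:
  assumes p: "prime p" and S: "subr S" and a: "a \<in> S" and \<alpha>: "\<alpha> \<noteq> 0"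
  shows "pm S p (Lfun ((Poly_Mapping.single \<alpha> a) ^ p))"
proof -
  have p0: "p > 0" using p prime_gt_0_nat by blast
  have "Lfun ((Poly_Mapping.single \<alpha> a) ^ p) = a ^ p * (\<Prod>i \<in> Poly_Mapping.keys \<alpha>. fact (p * Poly_Mapping.lookup \<alpha> i))"
    by (simp add: single_power Lfun_single wt_def keys_nsm[OF p0] lookup_nsm)
  moreover obtain i0 where i0: "i0 \<in> Poly_Mapping.keys \<alpha>" using \<alpha> by (metis all_not_in_conv keys_eq_empty)
  define l where "l = Poly_Mapping.lookup \<alpha> i0"
  have l: "l \<ge> 1" using i0 unfolding l_def by (simp add: in_keys_iff)
  have "p dvd fact (p * l)" using p0 l by (intro dvd_fact) auto
  then obtain N where N: "fact (p * l) = p * N" by blast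
  have "(fact (p * l) :: complex) = of_nat p * of_nat N"
    by (metis N of_nat_fact of_nat_mult)
  moreover have "(\<Prod>i \<in> Poly_Mapping.keys \<alpha>. (fact (p * Poly_Mapping.lookup \<alpha> i) :: complex)) =
      fact (p * l) * (\<Prod>i \<in> Poly_Mapping.keys \<alpha> - {i0}. fact (p * Poly_Mapping.lookup \<alpha> i))"
    unfolding l_def using i0 by (simp add: prod.remove)
  ultimately have "Lfun ((Poly_Mapping.single \<alpha> a) ^ p) =
      of_nat p * (a ^ p * of_nat N * (\<Prod>i \<in> Poly_Mapping.keys \<alpha> - {i0}. fact (p * Poly_Mapping.lookup \<alpha> i)))"
    by (simp add: algebra_simps)
  moreover have "a ^ p * of_nat N * (\<Prod>i \<in> Poly_Mapping.keys \<alpha> - {i0}. (fact (p * Poly_Mapping.lookup \<alpha> i) :: complex)) \<in> S"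
    using S a by (intro subr_mult subr_power subr_of_nat subr_prod fact_in) auto
  ultimately show ?thesis unfolding pm_def by blast
qed

lemma sum_split_ends: "(p::nat) > 0 \<Longrightarrow> (\<Sum>k\<le>p. h k) = h 0 + h p + (\<Sum>k\<in>{1..<p}. (h k :: complex))"
proof -
  assume p: "p > 0"
  have "{..p} = insert 0 (insert p {1..<p})" using p by auto
  then show ?thesis using p by (simp add: add.assoc)
qed

lemma frob:
  assumes p: "prime p" and S: "subr S" and a: "\<And>\<alpha>. a \<alpha> \<in> S"
  shows "finite A \<Longrightarrow> pm S p (Lfun ((\<Sum>\<alpha>\<in>A. Poly_Mapping.single \<alpha> (a \<alpha>)) ^ p)
              - (\<Sum>\<alpha>\<in>A. Lfun ((Poly_Mapping.single \<alpha> (a \<alpha>)) ^ p)))"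
proof (induction A rule: finite_induct)
  case empty
  have "p > 0" using p prime_gt_0_nat by blast
  then show ?case by (simp add: Lfun_zero pm_zero S power_0_left)
next
  case (insert x F)
  have p0: "p > 0" using p prime_gt_0_nat by blast
  define t where "t = Poly_Mapping.single x (a x)"
  define g where "g = (\<Sum>\<alpha>\<in>F. Poly_Mapping.single \<alpha> (a \<alpha>))"
  have ct: "cin S t" unfolding t_def using S a by (rule cin_single)
  have cg: "cin S g" unfolding g_def using S a by (intro cin_sum cin_single) auto
  define h where "h k = of_nat (p choose k) * t ^ k * g ^ (p - k)" for k
  have "(t + g) ^ p = (\<Sum>k\<le>p. h k)" unfolding h_def by (rule binomial_ring)
  then have "Lfun ((t + g) ^ p) = (\<Sum>k\<le>p. Lfun (h k))" by (simp add: Lfun_sum)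
  also have "\<dots> = Lfun (h 0) + Lfun (h p) + (\<Sum>k\<in>{1..<p}. Lfun (h k))"
    using p0 by (rule sum_split_ends)
  also have "Lfun (h 0) = Lfun (g ^ p)" unfolding h_def by simp
  also have "Lfun (h p) = Lfun (t ^ p)" unfolding h_def by simp
  finally have eq: "Lfun ((t + g) ^ p) = Lfun (g ^ p) + Lfun (t ^ p) + (\<Sum>k\<in>{1..<p}. Lfun (h k))" .
  have mid: "pm S p (Lfun (h k))" if k: "k \<in> {1..<p}" for k
  proof -
    have "p dvd (p choose k)" using k p by (intro dvd_choose_prime) auto
    then obtain N where N: "p choose k = p * N" by blast
    have "Lfun (h k) = of_nat (p choose k) * Lfun (t ^ k * g ^ (p - k))"
      unfolding h_def by (simp add: mult.assoc Lfun_of_nat_mult)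
    also have "\<dots> = of_nat p * (of_nat N * Lfun (t ^ k * g ^ (p - k)))" by (simp add: N)
    finally show ?thesis unfolding pm_def using S ct cg
      by (intro bexI[of _ "of_nat N * Lfun (t ^ k * g ^ (p - k))"])
         (auto intro!: subr_mult subr_of_nat Lfun_in cin_mult cin_power)
  qed
  have "Lfun ((\<Sum>\<alpha>\<in>insert x F. Poly_Mapping.single \<alpha> (a \<alpha>)) ^ p)
              - (\<Sum>\<alpha>\<in>insert x F. Lfun ((Poly_Mapping.single \<alpha> (a \<alpha>)) ^ p))
        = (Lfun (g ^ p) - (\<Sum>\<alpha>\<in>F. Lfun ((Poly_Mapping.single \<alpha> (a \<alpha>)) ^ p)))
          + (\<Sum>k\<in>{1..<p}. Lfun (h k))"
  proof -
    have s1: "(\<Sum>\<alpha>\<in>insert x F. Poly_Mapping.single \<alpha> (a \<alpha>)) = t + g"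
      unfolding t_def g_def using insert.hyps by (rule sum.insert)
    have s2: "(\<Sum>\<alpha>\<in>insert x F. Lfun ((Poly_Mapping.single \<alpha> (a \<alpha>)) ^ p))
        = Lfun (t ^ p) + (\<Sum>\<alpha>\<in>F. Lfun ((Poly_Mapping.single \<alpha> (a \<alpha>)) ^ p))"
      unfolding t_def using insert.hyps by (rule sum.insert)
    show ?thesis unfolding s1 s2 eq by (simp add: algebra_simps)
  qed
  moreover have "pm S p (\<Sum>k\<in>{1..<p}. Lfun (h k))" using S mid by (rule pm_sum)
  then have "pm S p ((Lfun (g ^ p) - (\<Sum>\<alpha>\<in>F. Lfun ((Poly_Mapping.single \<alpha> (a \<alpha>)) ^ p)))
          + (\<Sum>k\<in>{1..<p}. Lfun (h k)))"
    using pm_add[OF S insert.IH[folded g_def]] by blast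
  ultimately show ?case by simp
qed

theorem proposition4p8:
  fixes n :: nat and f :: cpoly
  assumes "in_vars n f"
    and "const_term f \<noteq> 0"
  shows "\<exists>m::nat. m \<ge> 1 \<and> Lfun (f ^ m) \<noteq> 0"
proof (rule ccontr)
  assume H: "\<not> (\<exists>m::nat. m \<ge> 1 \<and> Lfun (f ^ m) \<noteq> 0)"
  define c where "c = Poly_Mapping.lookup f 0"
  have c0: "c \<noteq> 0" using assms(2) unfolding c_def const_term_def .
  obtain l where l: "set l = Poly_Mapping.lookup f ` Poly_Mapping.keys f"
    using finite_list[of "Poly_Mapping.lookup f ` Poly_Mapping.keys f"] by auto
  define S where "S = rgen l"
  have S: "subr S" unfolding S_def by (rule subr_rgen)
  have a: "Poly_Mapping.lookup f \<alpha> \<in> S" for \<alpha>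
  proof (cases "\<alpha> \<in> Poly_Mapping.keys f")
    case True
    then have "Poly_Mapping.lookup f \<alpha> \<in> set l" using l by auto
    then show ?thesis using rgen_set[of l] unfolding S_def by auto
  next
    case False
    then show ?thesis using S subr_zero by (simp add: in_keys_iff)
  qed
  have cS: "c \<in> S" unfolding c_def by (rule a)
  obtain p where p: "prime p" and pc: "\<forall>r\<in>S. \<forall>k. of_nat p * r \<noteq> c ^ k"
    using star[of c l] cS c0 unfolding S_def by blast
  have p1: "p \<ge> 1" using prime_gt_0_nat[OF p] by linarith
  have Lp: "Lfun (f ^ p) = 0" using H p1 by blast
  define T where "T = (\<Sum>\<alpha>\<in>Poly_Mapping.keys f. Lfun ((Poly_Mapping.single \<alpha> (Poly_Mapping.lookup f \<alpha>)) ^ p))"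
  have fr: "pm S p (Lfun (f ^ p) - T)"
  proof -
    have "pm S p (Lfun ((\<Sum>\<alpha>\<in>Poly_Mapping.keys f. Poly_Mapping.single \<alpha> (Poly_Mapping.lookup f \<alpha>)) ^ p) - T)"
      unfolding T_def by (rule frob[where a="Poly_Mapping.lookup f", OF p S a]) simp
    then show ?thesis using pm_expand[of f, symmetric] by simp
  qed
  have k0: "0 \<in> Poly_Mapping.keys f" using c0 unfolding c_def by (simp add: in_keys_iff)
  define rest where "rest = (\<Sum>\<alpha>\<in>Poly_Mapping.keys f - {0}. Lfun ((Poly_Mapping.single \<alpha> (Poly_Mapping.lookup f \<alpha>)) ^ p))"
  have T: "T = c ^ p + rest"
    unfolding T_def rest_def c_def using k0 by (simp add: sum.remove Lfun_zero_power)
  have pr: "pm S p rest" unfolding rest_def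
    using S by (intro pm_sum Lfun_mono_power[OF p S]) (auto intro: a)
  have "pm S p ((Lfun (f ^ p) - T) + rest)" using pm_add[OF S fr pr] .
  then have "pm S p (- (c ^ p))" using Lp T by simp
  then obtain s where s: "s \<in> S" "- (c ^ p) = of_nat p * s" unfolding pm_def by blast
  then have "of_nat p * (- s) = c ^ p" by (metis minus_equation_iff mult_minus_right)
  moreover have "- s \<in> S" using S s by (simp add: subr_uminus)
  ultimately show False using pc by blast
qed

end
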